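(* Let $\Lambda$ be a finitely aligned left cancellative small category and $v\in\Lambda^0$. (1) For $C\in v\Lambda^*$ let $H(C)=\{\alpha\in v\Lambda:\alpha\Lambda\in C\}$. Then $C\mapsto H(C)$ is a bijection from $v\Lambda^*$ onto the set of directed hereditary subsets of $v\Lambda$, with inverse $H\mapsto\{E\in\mathcal D^{(0)}_v: E\supseteq\alpha\Lambda\text{ for some }\alpha\in H\}$; moreover $C_1\subseteq C_2$ iff $H(C_1)\subseteq H(C_2)$. (2) For $C\in v\Lambda^*$, the ultrafilter $\mathcal U_C$ in $\mathcal A_v$ corresponding to $C$ equals $\{A\in\mathcal A_v: A\supseteq H(C)\cap\alpha\Lambda\text{ for some }\alpha\in H(C)\}$.
   Context: A left cancellative small category (LCSC) is a small category $\Lambda$ such that $\alpha\beta=\alpha\gamma$ implies $\beta=\gamma$. Morphisms are composed as $\alpha\beta$ when $s(\alpha)=r(\beta)$; $\Lambda^0$ is the set of objects (identity morphisms); $v\Lambda=\{\alpha:r(\alpha)=v\}$; $\alpha\Lambda=\{\alpha\beta:r(\beta)=s(\alpha)\}$. $\Lambda$ is finitely aligned if for all $\alpha,\beta$ there is finite $G$ with $\alpha\Lambda\cap\beta\Lambda=\bigcup_{\varepsilon\in G}\varepsilon\Lambda$. For $\alpha\in\Lambda$, $\tau^\alpha(\beta)=\alpha\beta$ on $s(\alpha)\Lambda$ and $\sigma^\alpha:\alpha\Lambda\to s(\alpha)\Lambda$ is its inverse. A zigzag is a tuple $\zeta=(\alpha_1,\beta_1,\dots,\alpha_n,\beta_n)$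 with $r(\alpha_i)=r(\beta_i)$ and $s(\alpha_{i+1})=s(\beta_i)$; $s(\zeta)=s(\beta_n)$, $\mathcal Zv=\{\zeta:s(\zeta)=v\}$; $\varphi_\zeta=\sigma^{\alpha_1}\circ\tau^{\beta_1}\circ\cdots\circ\sigma^{\alpha_n}\circ\tau^{\beta_n}$ (partial map) with domain $A(\zeta)$. $\mathcal D^{(0)}_v$ is the set of nonempty $A(\zeta)$, $\zeta\in\mathcal Zv$ (it contains $\alpha\Lambda$ for $\alpha\in v\Lambda$), and $\mathcal A_v$ is the ring of sets generated by $\mathcal D^{(0)}_v$. A filter in $\mathcal D^{(0)}_v$ is a nonempty $C\subseteq\mathcal D^{(0)}_v$ closed under intersection and under supersets within $\mathcal D^{(0)}_v$; a finite $\mathcal F\subseteq\mathcal D^{(0)}_v$ covers $C$ if some $E\in C$ satisfies $E\subseteq\bigcup\mathcal F$; $v\Lambda^*$ is the set of filters $C$ in $\mathcal D^{(0)}_v$ such that every finite $\mathcal F\subseteq\mathcal D^{(0)}_v$ with $\mathcal F\cap C=\varnothing$ does not cover $C$. For $C\in v\Lambda^*$, $\mathcal U_C$ denotes the unique ultrafilter $\mathcal U$ of the ring $\mathcal A_v$ with $\mathcal U\cap\mathcal D^{(0)}_v=C$ (it is generated by the sets $E\setminus\bigcup\mathcal F$ with $E\in C$ and $\mathcal F$ finite not covering $C$). A nonempty $H\subseteq\Lambda$ is directed if $H\cap\alpha\Lambda\cap\beta\Lambda\ne\varnothing$ for all $\alpha,\beta\in H$, and hereditary if $\gamma\in H$ whenever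 $\alpha\in H$ and $\alpha\in\gamma\Lambda$. *)

theory Defs
  imports Main
begin

text \<open>A small category is given by its (set of) morphisms L, range and source
maps r, s (objects are identified with identity morphisms) and composition c,
where c a b is the composite "a b" (defined when s a = r b).\<close>

definition small_cat :: "'a set \<Rightarrow> ('a \<Rightarrow> 'a) \<Rightarrow> ('a \<Rightarrow> 'a) \<Rightarrow> ('a \<Rightarrow> 'a \<Rightarrow> 'a) \<Rightarrow> bool" where
  "small_cat L r s c \<longleftrightarrow>
     (\<forall>a\<in>L. r a \<in> L \<and> s a \<in> L \<and> r (r a) = r a \<and> s (r a) = r a \<and> r (s a) = s a
            \<and> s (s a) = s a \<and> c (r a) a = a \<and> c a (s a) = a) \<and>
     (\<forall>a\<in>L. \<forall>b\<in>L. s a = r b \<longrightarrow> c a b \<in> L \<and> r (c a b) = r a \<and> s (c a b) = s b) \<and>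
     (\<forall>a\<in>L. \<forall>b\<in>L. \<forall>d\<in>L. s a = r b \<longrightarrow> s b = r d \<longrightarrow> c (c a b) d = c a (c b d))"

definition objects :: "'a set \<Rightarrow> ('a \<Rightarrow> 'a) \<Rightarrow> 'a set" where
  "objects L r = {a \<in> L. r a = a}"

definition left_cancellative :: "'a set \<Rightarrow> ('a \<Rightarrow> 'a) \<Rightarrow> ('a \<Rightarrow> 'a) \<Rightarrow> ('a \<Rightarrow> 'a \<Rightarrow> 'a) \<Rightarrow> bool" where
  "left_cancellative L r s c \<longleftrightarrow>
     (\<forall>a\<in>L. \<forall>b\<in>L. \<forall>d\<in>L. s a = r b \<longrightarrow> s a = r d \<longrightarrow> c a b = c a d \<longrightarrow> b = d)"

definition LCSC :: "'a set \<Rightarrow> ('a \<Rightarrow> 'a) \<Rightarrow> ('a \<Rightarrow> 'a) \<Rightarrow> ('a \<Rightarrow> 'a \<Rightarrow> 'a) \<Rightarrow> bool" where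
  "LCSC L r s c \<longleftrightarrow> small_cat L r s c \<and> left_cancellative L r s c"

definition rset :: "'a set \<Rightarrow> ('a \<Rightarrow> 'a) \<Rightarrow> 'a \<Rightarrow> 'a set" where
  "rset L r v = {a \<in> L. r a = v}"

definition mset :: "'a set \<Rightarrow> ('a \<Rightarrow> 'a) \<Rightarrow> ('a \<Rightarrow> 'a) \<Rightarrow> ('a \<Rightarrow> 'a \<Rightarrow> 'a) \<Rightarrow> 'a \<Rightarrow> 'a set" where
  "mset L r s c a = {c a b | b. b \<in> L \<and> r b = s a}"

definition finitely_aligned :: "'a set \<Rightarrow> ('a \<Rightarrow> 'a) \<Rightarrow> ('a \<Rightarrow> 'a) \<Rightarrow> ('a \<Rightarrow> 'a \<Rightarrow> 'a) \<Rightarrow> bool" where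
  "finitely_aligned L r s c \<longleftrightarrow>
     (\<forall>a\<in>L. \<forall>b\<in>L. \<exists>G. finite G \<and> G \<subseteq> L \<and>
        mset L r s c a \<inter> mset L r s c b = (\<Union>e\<in>G. mset L r s c e))"

definition tau :: "'a set \<Rightarrow> ('a \<Rightarrow> 'a) \<Rightarrow> ('a \<Rightarrow> 'a) \<Rightarrow> ('a \<Rightarrow> 'a \<Rightarrow> 'a) \<Rightarrow> 'a \<Rightarrow> 'a \<Rightarrow> 'a option" where
  "tau L r s c b x = (if x \<in> L \<and> r x = s b then Some (c b x) else None)"

definition sigma :: "'a set \<Rightarrow> ('a \<Rightarrow> 'a) \<Rightarrow> ('a \<Rightarrow> 'a) \<Rightarrow> ('a \<Rightarrow> 'a \<Rightarrow> 'a) \<Rightarrow> 'a \<Rightarrow> 'a \<Rightarrow> 'a option" where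
  "sigma L r s c a x = (if x \<in> mset L r s c a
      then Some (THE y. y \<in> L \<and> r y = s a \<and> c a y = x) else None)"

text \<open>A zigzag (alpha_1,beta_1,...,alpha_n,beta_n) is the list [(alpha_1,beta_1),...,(alpha_n,beta_n)], n \<ge> 1.\<close>
definition is_zigzag :: "'a set \<Rightarrow> ('a \<Rightarrow> 'a) \<Rightarrow> ('a \<Rightarrow> 'a) \<Rightarrow> ('a \<times> 'a) list \<Rightarrow> bool" where
  "is_zigzag L r s z \<longleftrightarrow> z \<noteq> [] \<and>
     (\<forall>(a, b) \<in> set z. a \<in> L \<and> b \<in> L \<and> r a = r b) \<and>
     (\<forall>i. Suc i < length z \<longrightarrow> s (fst (z ! Suc i)) = s (snd (z ! i)))"

definition zz_source :: "('a \<Rightarrow> 'a) \<Rightarrow> ('a \<times> 'a) list \<Rightarrow> 'a" where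
  "zz_source s z = s (snd (last z))"

text \<open>phi_zeta = sigma^{alpha_1} o tau^{beta_1} o ... o sigma^{alpha_n} o tau^{beta_n}\<close>
primrec zz_map :: "'a set \<Rightarrow> ('a \<Rightarrow> 'a) \<Rightarrow> ('a \<Rightarrow> 'a) \<Rightarrow> ('a \<Rightarrow> 'a \<Rightarrow> 'a) \<Rightarrow> ('a \<times> 'a) list \<Rightarrow> 'a \<Rightarrow> 'a option" where
  "zz_map L r s c [] x = Some x"
| "zz_map L r s c (p # z) x =
     Option.bind (zz_map L r s c z x) (\<lambda>y. Option.bind (tau L r s c (snd p) y) (sigma L r s c (fst p)))"

definition zz_dom :: "'a set \<Rightarrow> ('a \<Rightarrow> 'a) \<Rightarrow> ('a \<Rightarrow> 'a) \<Rightarrow> ('a \<Rightarrow> 'a \<Rightarrow> 'a) \<Rightarrow> ('a \<times> 'a) list \<Rightarrow> 'a set" where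
  "zz_dom L r s c z = {x. zz_map L r s c z x \<noteq> None}"

definition D0 :: "'a set \<Rightarrow> ('a \<Rightarrow> 'a) \<Rightarrow> ('a \<Rightarrow> 'a) \<Rightarrow> ('a \<Rightarrow> 'a \<Rightarrow> 'a) \<Rightarrow> 'a \<Rightarrow> 'a set set" where
  "D0 L r s c v = {zz_dom L r s c z | z. is_zigzag L r s z \<and> zz_source s z = v \<and> zz_dom L r s c z \<noteq> {}}"

inductive_set ring_gen :: "'b set set \<Rightarrow> 'b set set" for G where
  basic: "A \<in> G \<Longrightarrow> A \<in> ring_gen G"
| empty: "{} \<in> ring_gen G"
| union: "A \<in> ring_gen G \<Longrightarrow> B \<in> ring_gen G \<Longrightarrow> A \<union> B \<in> ring_gen G"
| diff: "A \<in> ring_gen G \<Longrightarrow> B \<in> ring_gen G \<Longrightarrow> A - B \<in> ring_gen G"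

definition A_ring :: "'a set \<Rightarrow> ('a \<Rightarrow> 'a) \<Rightarrow> ('a \<Rightarrow> 'a) \<Rightarrow> ('a \<Rightarrow> 'a \<Rightarrow> 'a) \<Rightarrow> 'a \<Rightarrow> 'a set set" where
  "A_ring L r s c v = ring_gen (D0 L r s c v)"

definition filter_in :: "'b set set \<Rightarrow> 'b set set \<Rightarrow> bool" where
  "filter_in D C \<longleftrightarrow> C \<noteq> {} \<and> C \<subseteq> D \<and> (\<forall>E\<in>C. \<forall>F\<in>C. E \<inter> F \<in> C) \<and>
     (\<forall>E\<in>C. \<forall>F\<in>D. E \<subseteq> F \<longrightarrow> F \<in> C)"

definition ultrafilter_in :: "'b set set \<Rightarrow> 'b set set \<Rightarrow> bool" where
  "ultrafilter_in R U \<longleftrightarrow> filter_in R U \<and> {} \<notin> U \<and>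
     (\<forall>U'. filter_in R U' \<and> {} \<notin> U' \<and> U \<subseteq> U' \<longrightarrow> U' = U)"

definition Lstar :: "'a set \<Rightarrow> ('a \<Rightarrow> 'a) \<Rightarrow> ('a \<Rightarrow> 'a) \<Rightarrow> ('a \<Rightarrow> 'a \<Rightarrow> 'a) \<Rightarrow> 'a \<Rightarrow> 'a set set set" where
  "Lstar L r s c v = {C. filter_in (D0 L r s c v) C \<and>
     (\<forall>F. finite F \<and> F \<subseteq> D0 L r s c v \<and> F \<inter> C = {} \<longrightarrow> \<not> (\<exists>E\<in>C. E \<subseteq> \<Union>F))}"

definition U_of :: "'a set \<Rightarrow> ('a \<Rightarrow> 'a) \<Rightarrow> ('a \<Rightarrow> 'a) \<Rightarrow> ('a \<Rightarrow> 'a \<Rightarrow> 'a) \<Rightarrow> 'a \<Rightarrow> 'a set set \<Rightarrow> 'a set set" where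
  "U_of L r s c v C = (THE U. ultrafilter_in (A_ring L r s c v) U \<and> U \<inter> D0 L r s c v = C)"

definition directed :: "'a set \<Rightarrow> ('a \<Rightarrow> 'a) \<Rightarrow> ('a \<Rightarrow> 'a) \<Rightarrow> ('a \<Rightarrow> 'a \<Rightarrow> 'a) \<Rightarrow> 'a set \<Rightarrow> bool" where
  "directed L r s c H \<longleftrightarrow> H \<noteq> {} \<and>
     (\<forall>a\<in>H. \<forall>b\<in>H. H \<inter> mset L r s c a \<inter> mset L r s c b \<noteq> {})"

definition hereditary :: "'a set \<Rightarrow> ('a \<Rightarrow> 'a) \<Rightarrow> ('a \<Rightarrow> 'a) \<Rightarrow> ('a \<Rightarrow> 'a \<Rightarrow> 'a) \<Rightarrow> 'a set \<Rightarrow> bool" where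
  "hereditary L r s c H \<longleftrightarrow> H \<noteq> {} \<and>
     (\<forall>a\<in>H. \<forall>g\<in>L. a \<in> mset L r s c g \<longrightarrow> g \<in> H)"

definition H_of :: "'a set \<Rightarrow> ('a \<Rightarrow> 'a) \<Rightarrow> ('a \<Rightarrow> 'a) \<Rightarrow> ('a \<Rightarrow> 'a \<Rightarrow> 'a) \<Rightarrow> 'a \<Rightarrow> 'a set set \<Rightarrow> 'a set" where
  "H_of L r s c v C = {a \<in> rset L r v. mset L r s c a \<in> C}"

definition C_of :: "'a set \<Rightarrow> ('a \<Rightarrow> 'a) \<Rightarrow> ('a \<Rightarrow> 'a) \<Rightarrow> ('a \<Rightarrow> 'a \<Rightarrow> 'a) \<Rightarrow> 'a \<Rightarrow> 'a set \<Rightarrow> 'a set set" where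
  "C_of L r s c v H = {E \<in> D0 L r s c v. \<exists>a\<in>H. mset L r s c a \<subseteq> E}"

end

theory Submission
  imports Defs
begin



locale lcsc =
  fixes L :: "'a set" and r s :: "'a \<Rightarrow> 'a" and c :: "'a \<Rightarrow> 'a \<Rightarrow> 'a"
  assumes lcsc: "LCSC L r s c"
begin

abbreviation M where "M a \<equiv> mset L r s c a"

lemma rL[simp]: "a \<in> L \<Longrightarrow> r a \<in> L" and sL[simp]: "a \<in> L \<Longrightarrow> s a \<in> L"
  and rr[simp]: "a \<in> L \<Longrightarrow> r (r a) = r a" and sr[simp]: "a \<in> L \<Longrightarrow> s (r a) = r a"
  and rs[simp]: "a \<in> L \<Longrightarrow> r (s a) = s a" and ss[simp]: "a \<in> L \<Longrightarrow> s (s a) = s a"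
  and cr[simp]: "a \<in> L \<Longrightarrow> c (r a) a = a" and cs[simp]: "a \<in> L \<Longrightarrow> c a (s a) = a"
  using lcsc unfolding LCSC_def small_cat_def by auto

lemma cL[simp]: "a \<in> L \<Longrightarrow> b \<in> L \<Longrightarrow> s a = r b \<Longrightarrow> c a b \<in> L"
  and rc[simp]: "a \<in> L \<Longrightarrow> b \<in> L \<Longrightarrow> s a = r b \<Longrightarrow> r (c a b) = r a"
  and sc[simp]: "a \<in> L \<Longrightarrow> b \<in> L \<Longrightarrow> s a = r b \<Longrightarrow> s (c a b) = s b"
  using lcsc unfolding LCSC_def small_cat_def by auto

lemma assoc: "a \<in> L \<Longrightarrow> b \<in> L \<Longrightarrow> d \<in> L \<Longrightarrow> s a = r b \<Longrightarrow> s b = r d \<Longrightarrow> c (c a b) d = c a (c b d)"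
  using lcsc unfolding LCSC_def small_cat_def by blast

lemma cancel: "a \<in> L \<Longrightarrow> b \<in> L \<Longrightarrow> d \<in> L \<Longrightarrow> s a = r b \<Longrightarrow> s a = r d \<Longrightarrow> c a b = c a d \<Longrightarrow> b = d"
  using lcsc unfolding LCSC_def left_cancellative_def by blast

lemma M_iff: "x \<in> M a \<longleftrightarrow> (\<exists>b. b \<in> L \<and> r b = s a \<and> x = c a b)"
  unfolding mset_def by auto

lemma self_M: "a \<in> L \<Longrightarrow> a \<in> M a"
  unfolding M_iff by (rule exI[of _ "s a"]) auto

lemma M_L: "a \<in> L \<Longrightarrow> x \<in> M a \<Longrightarrow> x \<in> L \<and> r x = r a"
  unfolding M_iff by auto

lemma M_sub: "a \<in> L \<Longrightarrow> x \<in> M a \<Longrightarrow> M x \<subseteq> M a"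
proof
  fix y assume a: "a \<in> L" and x: "x \<in> M a" and y: "y \<in> M x"
  from x obtain b where b: "b \<in> L" "r b = s a" "x = c a b" unfolding M_iff by auto
  from y obtain w where w: "w \<in> L" "r w = s x" "y = c x w" unfolding M_iff by auto
  have "s x = s b" using a b by simp
  hence "y = c a (c b w)" using a b w assoc by simp
  moreover have "c b w \<in> L" "r (c b w) = s a" using a b w \<open>s x = s b\<close> by auto
  ultimately show "y \<in> M a" unfolding M_iff by blast
qed

lemma sigma_Some: "a \<in> L \<Longrightarrow> sigma L r s c a x = Some t \<longleftrightarrow> (t \<in> L \<and> r t = s a \<and> c a t = x)"
proof
  assume a: "a \<in> L" and h: "sigma L r s c a x = Some t"
  hence x: "x \<in> M a" unfolding sigma_def by (auto split: if_splits)
  then obtain y where y: "y \<in> L" "r y = s a" "x = c a y" unfolding M_iff by auto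
  have "(THE y. y \<in> L \<and> r y = s a \<and> c a y = x) = y"
    using y a cancel[of a _ y] by (intro the_equality) metis+
  with h x y show "t \<in> L \<and> r t = s a \<and> c a t = x" unfolding sigma_def by auto
next
  assume a: "a \<in> L" and h: "t \<in> L \<and> r t = s a \<and> c a t = x"
  hence x: "x \<in> M a" unfolding M_iff by auto
  have "(THE y. y \<in> L \<and> r y = s a \<and> c a y = x) = t"
    using h a cancel[of a _ t] by (intro the_equality) metis+
  with x show "sigma L r s c a x = Some t" unfolding sigma_def by auto
qed

definition step where "step p y = Option.bind (tau L r s c (snd p) y) (sigma L r s c (fst p))"

lemma step_Some: "fst p \<in> L \<Longrightarrow> step p y = Some t \<longleftrightarrow>
   (y \<in> L \<and> r y = s (snd p) \<and> t \<in> L \<and> r t = s (fst p) \<and> c (snd p) y = c (fst p) t)"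
  unfolding step_def tau_def by (auto simp: sigma_Some)

lemma zz_Cons: "zz_map L r s c (p # z) x = Option.bind (zz_map L r s c z x) (step p)"
  unfolding step_def[abs_def] by simp

declare zz_map.simps(2)[simp del]

lemma zz_append: "zz_map L r s c (z1 @ z2) x = Option.bind (zz_map L r s c z2 x) (zz_map L r s c z1)"
  by (induction z1) (auto simp: zz_Cons)

definition okz where "okz z \<longleftrightarrow> (\<forall>p\<in>set z. fst p \<in> L \<and> snd p \<in> L)"

lemma zz_inv: "okz z \<Longrightarrow> zz_map L r s c z x = Some y \<Longrightarrow> zz_map L r s c (rev (map prod.swap z)) y = Some x"
proof (induction z arbitrary: y)
  case Nil thus ?case by simp
next
  case (Cons p z)
  from Cons.prems obtain m where m: "zz_map L r s c z x = Some m" "step p m = Some y"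
    by (auto simp: zz_Cons bind_eq_Some_conv)
  have ok: "okz z" "fst p \<in> L" "snd p \<in> L" using Cons.prems(1) by (auto simp: okz_def)
  have "step (prod.swap p) y = Some m" using m(2) ok by (auto simp: step_Some)
  hence "zz_map L r s c [prod.swap p] y = Some m" by (simp add: zz_Cons)
  thus ?case using Cons.IH[OF ok(1) m(1)] by (simp add: zz_append)
qed

lemma zz_right: "okz z \<Longrightarrow> x \<in> L \<Longrightarrow> zz_map L r s c z x = Some y \<Longrightarrow>
   y \<in> L \<and> s y = s x \<and> (\<forall>w\<in>L. r w = s x \<longrightarrow> zz_map L r s c z (c x w) = Some (c y w))"
proof (induction z arbitrary: y)
  case Nil thus ?case by simp
next
  case (Cons p z)
  from Cons.prems obtain m where m: "zz_map L r s c z x = Some m" "step p m = Some y"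
    by (auto simp: zz_Cons bind_eq_Some_conv)
  have ok: "okz z" "fst p \<in> L" "snd p \<in> L" using Cons.prems(1) by (auto simp: okz_def)
  note IH = Cons.IH[OF ok(1) Cons.prems(2) m(1)]
  from m(2) ok have st: "m \<in> L" "r m = s (snd p)" "y \<in> L" "r y = s (fst p)" "c (snd p) m = c (fst p) y"
    by (auto simp: step_Some)
  have "s (c (snd p) m) = s m" using sc[of "snd p" m] st ok by simp
  moreover have "s (c (fst p) y) = s y" using sc[of "fst p" y] st ok by simp
  ultimately have sy: "s y = s x" using IH st by simp
  show ?case
  proof (intro conjI ballI impI)
    fix w assume w: "w \<in> L" "r w = s x"
    have "step p (c m w) = Some (c y w)"
      unfolding step_Some[OF ok(2)] using st w sy IH ok
      by (auto simp: assoc[symmetric])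
    thus "zz_map L r s c (p # z) (c x w) = Some (c y w)"
      using IH w by (simp add: zz_Cons)
  qed (use st sy in auto)
qed

lemma zz_dom_L: "okz z \<Longrightarrow> z \<noteq> [] \<Longrightarrow> zz_map L r s c z x = Some y \<Longrightarrow> x \<in> L \<and> r x = s (snd (last z))"
proof (induction z arbitrary: y)
  case Nil thus ?case by simp
next
  case (Cons p z)
  from Cons.prems obtain m where m: "zz_map L r s c z x = Some m" "step p m = Some y"
    by (auto simp: zz_Cons bind_eq_Some_conv)
  have ok: "okz z" "fst p \<in> L" "snd p \<in> L" using Cons.prems(1) by (auto simp: okz_def)
  show ?case
  proof (cases "z = []")
    case True thus ?thesis using m ok by (auto simp: step_Some)
  next
    case False thus ?thesis using Cons.IH[OF ok(1) False m(1)] by simp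
  qed
qed

lemma zz_val: "okz z \<Longrightarrow> z \<noteq> [] \<Longrightarrow> zz_map L r s c z x = Some y \<Longrightarrow> y \<in> L \<and> r y = s (fst (hd z))"
  by (cases z) (auto simp: zz_Cons bind_eq_Some_conv okz_def step_Some)

end



context lcsc begin

lemma lemB: "h \<in> L \<Longrightarrow> b \<in> L \<Longrightarrow> r h = s b \<Longrightarrow>
   y \<in> M h \<longleftrightarrow> (y \<in> L \<and> r y = s b \<and> c b y \<in> M (c b h))"
proof
  assume h: "h \<in> L" "b \<in> L" "r h = s b" and y: "y \<in> M h"
  from y obtain w where w: "w \<in> L" "r w = s h" "y = c h w" unfolding M_iff by auto
  have "c b y = c (c b h) w" using h w assoc[of b h w] by simp
  moreover have "r w = s (c b h)" using h w by simp
  ultimately have "c b y \<in> M (c b h)" using w unfolding M_iff by blast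
  moreover have "y \<in> L" "r y = s b" using h w by simp_all
  ultimately show "y \<in> L \<and> r y = s b \<and> c b y \<in> M (c b h)" by blast
next
  assume h: "h \<in> L" "b \<in> L" "r h = s b" and y: "y \<in> L \<and> r y = s b \<and> c b y \<in> M (c b h)"
  then obtain w where w: "w \<in> L" "r w = s (c b h)" "c b y = c (c b h) w" unfolding M_iff by auto
  have rw: "r w = s h" using w h by simp
  have "c (c b h) w = c b (c h w)" using assoc[of b h w] h w rw by simp
  hence "c b y = c b (c h w)" using w(3) by simp
  moreover have chw: "c h w \<in> L" "r (c h w) = s b" using h w rw by simp_all
  ultimately have "y = c h w" using cancel[of b y "c h w"] h y by metis
  thus "y \<in> M h" using w rw unfolding M_iff by blast
qed

lemma lemA: "a \<in> L \<Longrightarrow> b \<in> L \<Longrightarrow> g \<in> L \<Longrightarrow> r g = s a \<Longrightarrow>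
   (\<exists>t. step (a,b) y = Some t \<and> t \<in> M g) \<longleftrightarrow> (y \<in> L \<and> r y = s b \<and> c b y \<in> M (c a g))"
proof
  assume h: "a \<in> L" "b \<in> L" "g \<in> L" "r g = s a" and "\<exists>t. step (a,b) y = Some t \<and> t \<in> M g"
  then obtain t where t: "step (a,b) y = Some t" "t \<in> M g" by auto
  hence st: "y \<in> L" "r y = s b" "t \<in> L" "r t = s a" "c b y = c a t" using h by (auto simp: step_Some)
  from t obtain w where w: "w \<in> L" "r w = s g" "t = c g w" unfolding M_iff by auto
  have "c a t = c (c a g) w" using h w assoc[of a g w] by simp
  moreover have "r w = s (c a g)" using h w by simp
  ultimately have "c b y \<in> M (c a g)" using st w unfolding M_iff by metis
  thus "y \<in> L \<and> r y = s b \<and> c b y \<in> M (c a g)" using st by blast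
next
  assume h: "a \<in> L" "b \<in> L" "g \<in> L" "r g = s a" and y: "y \<in> L \<and> r y = s b \<and> c b y \<in> M (c a g)"
  then obtain w where w: "w \<in> L" "r w = s (c a g)" "c b y = c (c a g) w" unfolding M_iff by auto
  have rw: "r w = s g" using w h by simp
  have "c (c a g) w = c a (c g w)" using assoc[of a g w] h w rw by simp
  hence e: "c b y = c a (c g w)" using w(3) by simp
  have "step (a,b) y = Some (c g w)" using h y rw w e by (auto simp: step_Some)
  moreover have "c g w \<in> M g" using w rw unfolding M_iff by blast
  ultimately show "\<exists>t. step (a,b) y = Some t \<and> t \<in> M g" by blast
qed

end

locale lcfa = lcsc + assumes fa: "finitely_aligned L r s c"
begin

lemma step_pre: assumes ab: "a \<in> L" "b \<in> L" and g: "g \<in> L"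
  shows "\<exists>G. finite G \<and> G \<subseteq> L \<and> {y. \<exists>t. step (a,b) y = Some t \<and> t \<in> M g} = (\<Union>h\<in>G. M h)"
proof (cases "r g = s a")
  case False
  have "{y. \<exists>t. step (a,b) y = Some t \<and> t \<in> M g} = {}"
    using False ab g M_L by (force simp: step_Some)
  thus ?thesis by (intro exI[of _ "{}"]) auto
next
  case True
  have ag: "c a g \<in> L" using ab g True by simp
  from fa ab ag obtain G0 where G0: "finite G0" "G0 \<subseteq> L" "M b \<inter> M (c a g) = (\<Union>e\<in>G0. M e)"
    unfolding finitely_aligned_def by meson
  have "\<forall>e\<in>G0. \<exists>h. h \<in> L \<and> r h = s b \<and> e = c b h"
  proof
    fix e assume e: "e \<in> G0"
    hence "e \<in> M b" using G0 self_M by blast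
    thus "\<exists>h. h \<in> L \<and> r h = s b \<and> e = c b h" unfolding M_iff by blast
  qed
  then obtain hf where hf: "\<And>e. e \<in> G0 \<Longrightarrow> hf e \<in> L \<and> r (hf e) = s b \<and> e = c b (hf e)"
    by metis
  have "{y. \<exists>t. step (a,b) y = Some t \<and> t \<in> M g} = (\<Union>h\<in>hf ` G0. M h)"
  proof (intro set_eqI iffI)
    fix y assume "y \<in> {y. \<exists>t. step (a,b) y = Some t \<and> t \<in> M g}"
    hence y: "y \<in> L" "r y = s b" "c b y \<in> M (c a g)" using lemA[OF ab g True] by auto
    have "c b y \<in> M b" using y unfolding M_iff by auto
    with y G0 obtain e where e: "e \<in> G0" "c b y \<in> M e" by blast
    have "y \<in> M (hf e)" using lemB[of "hf e" b y] hf[OF e(1)] ab y e by auto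
    thus "y \<in> (\<Union>h\<in>hf ` G0. M h)" using e by blast
  next
    fix y assume "y \<in> (\<Union>h\<in>hf ` G0. M h)"
    then obtain e where e: "e \<in> G0" "y \<in> M (hf e)" by blast
    hence y: "y \<in> L" "r y = s b" "c b y \<in> M e" using lemB[of "hf e" b y] hf[OF e(1)] ab by auto
    hence "c b y \<in> M (c a g)" using G0 e by blast
    thus "y \<in> {y. \<exists>t. step (a,b) y = Some t \<and> t \<in> M g}" using lemA[OF ab g True] y by auto
  qed
  thus ?thesis using G0 hf by (intro exI[of _ "hf ` G0"]) auto
qed

lemma zz_pre: "okz z \<Longrightarrow> g \<in> L \<Longrightarrow>
  \<exists>G. finite G \<and> G \<subseteq> L \<and> {x. \<exists>y. zz_map L r s c z x = Some y \<and> y \<in> M g} = (\<Union>h\<in>G. M h)"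
proof (induction z arbitrary: g)
  case Nil thus ?case by (intro exI[of _ "{g}"]) auto
next
  case (Cons p z)
  have ok: "okz z" "fst p \<in> L" "snd p \<in> L" using Cons.prems(1) by (auto simp: okz_def)
  obtain G' where G': "finite G'" "G' \<subseteq> L"
     "{y. \<exists>t. step (fst p, snd p) y = Some t \<and> t \<in> M g} = (\<Union>h\<in>G'. M h)"
    using step_pre[OF ok(2,3) Cons.prems(2)] by blast
  have "\<forall>h\<in>G'. \<exists>Gh. finite Gh \<and> Gh \<subseteq> L \<and> {x. \<exists>y. zz_map L r s c z x = Some y \<and> y \<in> M h} = (\<Union>k\<in>Gh. M k)"
  proof
    fix h assume "h \<in> G'" hence "h \<in> L" using G'(2) by blast
    thus "\<exists>Gh. finite Gh \<and> Gh \<subseteq> L \<and> {x. \<exists>y. zz_map L r s c z x = Some y \<and> y \<in> M h} = (\<Union>k\<in>Gh. M k)"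
      by (rule Cons.IH[OF ok(1)])
  qed
  hence "\<exists>f. \<forall>h\<in>G'. finite (f h) \<and> f h \<subseteq> L \<and> {x. \<exists>y. zz_map L r s c z x = Some y \<and> y \<in> M h} = (\<Union>k\<in>f h. M k)"
    by (rule bchoice)
  then obtain f where f0: "\<forall>h\<in>G'. finite (f h) \<and> f h \<subseteq> L \<and> {x. \<exists>y. zz_map L r s c z x = Some y \<and> y \<in> M h} = (\<Union>k\<in>f h. M k)" ..
  have fe: "\<And>h. h \<in> G' \<Longrightarrow> {x. \<exists>y. zz_map L r s c z x = Some y \<and> y \<in> M h} = (\<Union>k\<in>f h. M k)"
    and ff: "\<And>h. h \<in> G' \<Longrightarrow> finite (f h)" and fL: "\<And>h. h \<in> G' \<Longrightarrow> f h \<subseteq> L"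
    using f0 by simp_all
  have eq: "\<And>m. (\<exists>t. step p m = Some t \<and> t \<in> M g) \<longleftrightarrow> (\<exists>h\<in>G'. m \<in> M h)"
    using G'(3) by (auto simp: set_eq_iff)
  have "{x. \<exists>y. zz_map L r s c (p # z) x = Some y \<and> y \<in> M g}
      = (\<Union>h\<in>G'. {x. \<exists>y. zz_map L r s c z x = Some y \<and> y \<in> M h})"
    using eq by (auto simp: zz_Cons bind_eq_Some_conv; blast)
  also have "\<dots> = (\<Union>h\<in>G'. \<Union>k\<in>f h. M k)" using fe by (intro SUP_cong) auto
  also have "\<dots> = (\<Union>k\<in>(\<Union>h\<in>G'. f h). M k)" by auto
  finally show ?case using ff fL G'(1) by (intro exI[of _ "\<Union>h\<in>G'. f h"]) blast
qed

end




locale lcv = lcfa + fixes v assumes v: "v \<in> objects L r"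
begin

lemma vL: "v \<in> L" "r v = v" "s v = v"
  using v unfolding objects_def by (auto, metis sr)

lemma zig_ok: "is_zigzag L r s z \<Longrightarrow> okz z"
  unfolding is_zigzag_def okz_def by auto

lemma dom_iff: "x \<in> zz_dom L r s c z \<longleftrightarrow> (\<exists>y. zz_map L r s c z x = Some y)"
  unfolding zz_dom_def by auto

lemma D0E: "E \<in> D0 L r s c v \<longleftrightarrow> (\<exists>z. is_zigzag L r s z \<and> zz_source s z = v \<and> zz_dom L r s c z = E \<and> E \<noteq> {})"
  unfolding D0_def by auto

lemma D0_sub: assumes "E \<in> D0 L r s c v" "x \<in> E" shows "x \<in> L \<and> r x = v"
proof -
  from assms obtain z where z: "is_zigzag L r s z" "zz_source s z = v" "zz_dom L r s c z = E"
    unfolding D0E by blast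
  from z assms obtain y where "zz_map L r s c z x = Some y" using dom_iff by blast
  moreover have "z \<noteq> []" using z unfolding is_zigzag_def by blast
  ultimately show ?thesis using zz_dom_L[OF zig_ok[OF z(1)]] z(2) unfolding zz_source_def by blast
qed

lemma D0_right: assumes "E \<in> D0 L r s c v" "x \<in> E" shows "M x \<subseteq> E"
proof
  fix u assume u: "u \<in> M x"
  from assms obtain z where z: "is_zigzag L r s z" "zz_source s z = v" "zz_dom L r s c z = E"
    unfolding D0E by blast
  from z assms obtain y where y: "zz_map L r s c z x = Some y" using dom_iff by blast
  have xL: "x \<in> L" using D0_sub assms by blast
  from u obtain w where w: "w \<in> L" "r w = s x" "u = c x w" unfolding M_iff by blast
  have "zz_map L r s c z u = Some (c y w)" using zz_right[OF zig_ok[OF z(1)] xL y] w by blast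
  thus "u \<in> E" using z(3) using dom_iff by blast
qed

lemma D0_M: assumes "a \<in> L" "r a = v" shows "M a \<in> D0 L r s c v"
proof -
  have zz: "is_zigzag L r s [(a, v)]" unfolding is_zigzag_def using assms vL by auto
  have src: "zz_source s [(a,v)] = v" unfolding zz_source_def using vL by simp
  have "zz_dom L r s c [(a,v)] = M a"
  proof (intro set_eqI iffI)
    fix x assume "x \<in> zz_dom L r s c [(a,v)]"
    then obtain t where "step (a,v) x = Some t" using dom_iff by (auto simp: zz_Cons)
    hence t: "x \<in> L" "r x = v" "t \<in> L" "r t = s a" "c v x = c a t" using assms vL by (auto simp: step_Some)
    have "c v x = x" using cr[OF t(1)] t(2) by simp
    thus "x \<in> M a" using t unfolding M_iff by auto
  next
    fix x assume "x \<in> M a"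
    then obtain t where t: "t \<in> L" "r t = s a" "x = c a t" unfolding M_iff by blast
    have xL: "x \<in> L" "r x = v" using t assms by simp_all
    have "c v x = x" using cr[OF xL(1)] xL(2) by simp
    hence "step (a,v) x = Some t" using t xL assms vL by (auto simp: step_Some)
    thus "x \<in> zz_dom L r s c [(a,v)]" using dom_iff by (auto simp: zz_Cons)
  qed
  moreover have "M a \<noteq> {}" using self_M[OF assms(1)] by blast
  ultimately show ?thesis unfolding D0E using zz src by blast
qed

lemma D0_fin: assumes "E \<in> D0 L r s c v"
  shows "\<exists>G. finite G \<and> G \<subseteq> rset L r v \<and> E = (\<Union>g\<in>G. M g)"
proof -
  from assms obtain z where z: "is_zigzag L r s z" "zz_source s z = v" "zz_dom L r s c z = E"
    unfolding D0E by blast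
  have ne: "z \<noteq> []" and ok: "okz z" using z zig_ok unfolding is_zigzag_def by auto
  define g where "g = s (fst (hd z))"
  have fL: "fst (hd z) \<in> L" using ok ne unfolding okz_def by auto
  hence gL: "g \<in> L" unfolding g_def by simp
  have "E = {x. \<exists>y. zz_map L r s c z x = Some y \<and> y \<in> M g}"
  proof (intro set_eqI iffI)
    fix x assume "x \<in> E"
    then obtain y where y: "zz_map L r s c z x = Some y" using z(3) using dom_iff by blast
    have yy: "y \<in> L" "r y = g" using zz_val[OF ok ne y] unfolding g_def by auto
    have "y = c g y" using cr[OF yy(1)] yy(2) by simp
    moreover have "r y = s g" using yy gL fL unfolding g_def by simp
    ultimately have "y \<in> M g" unfolding M_iff using yy by blast
    thus "x \<in> {x. \<exists>y. zz_map L r s c z x = Some y \<and> y \<in> M g}" using y by blast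
  next
    fix x assume "x \<in> {x. \<exists>y. zz_map L r s c z x = Some y \<and> y \<in> M g}"
    thus "x \<in> E" using z(3) using dom_iff by blast
  qed
  then obtain G where G: "finite G" "G \<subseteq> L" "E = (\<Union>h\<in>G. M h)"
    using zz_pre[OF ok gL] by metis
  have "G \<subseteq> rset L r v"
  proof
    fix h assume h: "h \<in> G"
    hence "h \<in> E" using G self_M by blast
    thus "h \<in> rset L r v" using D0_sub[OF assms] unfolding rset_def by blast
  qed
  thus ?thesis using G by blast
qed

definition inv where "inv z = rev (map prod.swap z)"

lemma zig_chain: "is_zigzag L r s z \<longleftrightarrow> z \<noteq> [] \<and> (\<forall>(a, b) \<in> set z. a \<in> L \<and> b \<in> L \<and> r a = r b) \<and>
   successively (\<lambda>p q. s (fst q) = s (snd p)) z"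
  unfolding is_zigzag_def successively_conv_nth by blast

lemma succ_sym: "successively (\<lambda>x y. s (snd x) = s (fst y)) z = successively (\<lambda>p q. s (fst q) = s (snd p)) z"
  by (induction z rule: induct_list012) auto

lemma D0_int: assumes E: "E \<in> D0 L r s c v" and F: "F \<in> D0 L r s c v" and ne: "E \<inter> F \<noteq> {}"
  shows "E \<inter> F \<in> D0 L r s c v"
proof -
  from E obtain z1 where z1: "is_zigzag L r s z1" "zz_source s z1 = v" "zz_dom L r s c z1 = E"
    unfolding D0E by blast
  from F obtain z2 where z2: "is_zigzag L r s z2" "zz_source s z2 = v" "zz_dom L r s c z2 = F"
    unfolding D0E by blast
  define w where "w = inv z1 @ z1 @ inv z2 @ z2"
  have n1: "z1 \<noteq> []" and n2: "z2 \<noteq> []" using z1 z2 unfolding is_zigzag_def by auto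
  have ok1: "okz z1" and ok2: "okz z2" using z1 z2 zig_ok by auto
  have "is_zigzag L r s w"
    using z1(1,2) z2(1,2) n1 n2 unfolding zig_chain w_def inv_def zz_source_def
    by (auto simp: successively_append_iff successively_map hd_map last_map hd_rev last_rev succ_sym)
  moreover have "zz_source s w = v" using z2(2) n2 unfolding w_def zz_source_def by simp
  moreover have "zz_dom L r s c w = E \<inter> F"
  proof (intro set_eqI iffI)
    fix x assume "x \<in> zz_dom L r s c w"
    then obtain y2 x' y1 x'' where "zz_map L r s c z2 x = Some y2" "zz_map L r s c (inv z2) y2 = Some x'"
       "zz_map L r s c z1 x' = Some y1" "zz_map L r s c (inv z1) y1 = Some x''"
      using dom_iff w_def by (auto simp: zz_append bind_eq_Some_conv)
    moreover have "zz_map L r s c (inv z2) y2 = Some x"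
      using zz_inv[OF ok2] calculation unfolding inv_def by blast
    ultimately show "x \<in> E \<inter> F" using z1(3) z2(3) using dom_iff by auto
  next
    fix x assume "x \<in> E \<inter> F"
    then obtain y1 y2 where y: "zz_map L r s c z1 x = Some y1" "zz_map L r s c z2 x = Some y2"
      using z1(3) z2(3) using dom_iff by blast
    have "zz_map L r s c (inv z1) y1 = Some x" "zz_map L r s c (inv z2) y2 = Some x"
      using zz_inv[OF ok1 y(1)] zz_inv[OF ok2 y(2)] unfolding inv_def by auto
    thus "x \<in> zz_dom L r s c w" using y using dom_iff w_def by (simp add: zz_append)
  qed
  ultimately show ?thesis unfolding D0E using ne by blast
qed

end



lemma rg_int: "A \<in> ring_gen G \<Longrightarrow> B \<in> ring_gen G \<Longrightarrow> A \<inter> B \<in> ring_gen G"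
proof -
  assume "A \<in> ring_gen G" "B \<in> ring_gen G"
  hence "A - (A - B) \<in> ring_gen G" by (intro ring_gen.diff)
  moreover have "A - (A - B) = A \<inter> B" by blast
  ultimately show ?thesis by simp
qed

lemma uf_prime:
  assumes U: "ultrafilter_in (ring_gen G) U" and A: "A \<in> ring_gen G" "A \<notin> U"
  shows "\<exists>B\<in>U. A \<inter> B = {}"
proof (rule ccontr)
  assume "\<not> (\<exists>B\<in>U. A \<inter> B = {})"
  hence nz: "\<And>B. B \<in> U \<Longrightarrow> A \<inter> B \<noteq> {}" by blast
  let ?R = "ring_gen G"
  define U2 where "U2 = {X \<in> ?R. \<exists>B\<in>U. A \<inter> B \<subseteq> X}"
  have fU: "filter_in ?R U" "{} \<notin> U" using U unfolding ultrafilter_in_def by auto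
  have UR: "U \<subseteq> ?R" using fU(1) unfolding filter_in_def by (elim conjE)
  have sub: "U \<subseteq> U2" unfolding U2_def using UR by blast
  have AU2: "A \<in> U2" using fU A unfolding U2_def filter_in_def by blast
  have "filter_in ?R U2"
    unfolding filter_in_def
  proof (intro conjI ballI impI)
    show "U2 \<noteq> {}" using AU2 by blast
    show "U2 \<subseteq> ?R" unfolding U2_def by blast
  next
    fix E F
    assume E: "E \<in> U2" and F: "F \<in> U2"
    from E obtain B1 where B1: "B1 \<in> U" "A \<inter> B1 \<subseteq> E" "E \<in> ?R" unfolding U2_def by auto
    from F obtain B2 where B2: "B2 \<in> U" "A \<inter> B2 \<subseteq> F" "F \<in> ?R" unfolding U2_def by auto
    have "B1 \<inter> B2 \<in> U" using fU(1) B1 B2 unfolding filter_in_def by auto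
    moreover have "A \<inter> (B1 \<inter> B2) \<subseteq> E \<inter> F" using B1 B2 by auto
    moreover have "E \<inter> F \<in> ?R" using rg_int B1 B2 by auto
    ultimately show "E \<inter> F \<in> U2" unfolding U2_def by auto
  next
    fix E F assume "E \<in> U2" "F \<in> ?R" "E \<subseteq> F"
    thus "F \<in> U2" unfolding U2_def by blast
  qed
  moreover have "{} \<notin> U2" using nz unfolding U2_def by blast
  moreover have mx: "\<forall>U'. filter_in ?R U' \<and> {} \<notin> U' \<and> U \<subseteq> U' \<longrightarrow> U' = U"
    using U unfolding ultrafilter_in_def by (elim conjE)
  ultimately have "U2 = U" using sub by simp
  thus False using AU2 A by blast
qed

lemma uf_basic:
  assumes U: "ultrafilter_in (ring_gen G) U"
  shows "U \<subseteq> ring_gen G" "{} \<notin> U" "\<And>A B. A \<in> U \<Longrightarrow> B \<in> U \<Longrightarrow> A \<inter> B \<in> U"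
    "\<And>A B. A \<in> U \<Longrightarrow> B \<in> ring_gen G \<Longrightarrow> A \<subseteq> B \<Longrightarrow> B \<in> U"
  using U unfolding ultrafilter_in_def filter_in_def by auto

lemma uf_union:
  assumes U: "ultrafilter_in (ring_gen G) U" and AB: "A \<in> ring_gen G" "B \<in> ring_gen G"
  shows "A \<union> B \<in> U \<longleftrightarrow> A \<in> U \<or> B \<in> U"
proof
  assume h: "A \<union> B \<in> U"
  show "A \<in> U \<or> B \<in> U"
  proof (rule ccontr)
    assume "\<not> (A \<in> U \<or> B \<in> U)"
    then obtain B1 B2 where "B1 \<in> U" "B2 \<in> U" "A \<inter> B1 = {}" "B \<inter> B2 = {}"
      using uf_prime[OF U] AB by metis
    moreover have "(A \<union> B) \<inter> B1 \<inter> B2 \<in> U"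
      by (rule uf_basic(3)[OF U uf_basic(3)[OF U h]]) (use calculation in simp_all)
    moreover have "(A \<union> B) \<inter> B1 \<inter> B2 = {}" using calculation by auto
    ultimately show False using uf_basic(2)[OF U] by simp
  qed
next
  assume "A \<in> U \<or> B \<in> U"
  thus "A \<union> B \<in> U" using uf_basic(4)[OF U _ ring_gen.union[OF AB]] by auto
qed

lemma uf_diff:
  assumes U: "ultrafilter_in (ring_gen G) U" and AB: "A \<in> ring_gen G" "B \<in> ring_gen G"
  shows "A - B \<in> U \<longleftrightarrow> A \<in> U \<and> B \<notin> U"
proof
  assume h: "A - B \<in> U"
  have "A \<in> U" using uf_basic(4)[OF U h AB(1)] by auto
  moreover have "B \<notin> U"
  proof
    assume "B \<in> U"
    hence "(A - B) \<inter> B \<in> U" using uf_basic(3)[OF U h] by simp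
    moreover have "(A - B) \<inter> B = {}" by auto
    ultimately show False using uf_basic(2)[OF U] by simp
  qed
  ultimately show "A \<in> U \<and> B \<notin> U" by blast
next
  assume h: "A \<in> U \<and> B \<notin> U"
  then obtain B' where B': "B' \<in> U" "B \<inter> B' = {}" using uf_prime[OF U AB(2)] by blast
  have "A \<inter> B' \<in> U" using uf_basic(3)[OF U] h B' by simp
  moreover have "A \<inter> B' \<subseteq> A - B" using B' by blast
  ultimately show "A - B \<in> U" using uf_basic(4)[OF U _ ring_gen.diff[OF AB]] by auto
qed

lemma uf_eq:
  assumes U1: "ultrafilter_in (ring_gen G) U1" and U2: "ultrafilter_in (ring_gen G) U2"
    and eq: "U1 \<inter> G = U2 \<inter> G"
  shows "U1 = U2"
proof -
  have "A \<in> U1 \<longleftrightarrow> A \<in> U2" if "A \<in> ring_gen G" for A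
    using that
  proof (induction A rule: ring_gen.induct)
    case (basic A) thus ?case using eq by blast
  next
    case empty thus ?case using uf_basic(2)[OF U1] uf_basic(2)[OF U2] by blast
  next
    case (union A B) thus ?case using uf_union[OF U1] uf_union[OF U2] by blast
  next
    case (diff A B) thus ?case using uf_diff[OF U1] uf_diff[OF U2] by blast
  qed
  thus ?thesis using uf_basic(1)[OF U1] uf_basic(1)[OF U2] by blast
qed




context lcv begin

abbreviation "DD \<equiv> D0 L r s c v"
abbreviation "LS \<equiv> Lstar L r s c v"
abbreviation "DHs \<equiv> {H. H \<subseteq> rset L r v \<and> directed L r s c H \<and> hereditary L r s c H}"

lemma LS_filter: assumes "C \<in> LS"
  shows "C \<noteq> {}" "C \<subseteq> DD" "\<And>E F. E \<in> C \<Longrightarrow> F \<in> C \<Longrightarrow> E \<inter> F \<in> C"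
    "\<And>E F. E \<in> C \<Longrightarrow> F \<in> DD \<Longrightarrow> E \<subseteq> F \<Longrightarrow> F \<in> C"
    "\<And>F E. finite F \<Longrightarrow> F \<subseteq> DD \<Longrightarrow> F \<inter> C = {} \<Longrightarrow> E \<in> C \<Longrightarrow> \<not> E \<subseteq> \<Union>F"
  using assms unfolding Lstar_def filter_in_def by auto

lemma cov: assumes C: "C \<in> LS" and E: "E \<in> C" and G: "finite G" "G \<subseteq> rset L r v"
  and sub: "E \<subseteq> (\<Union>g\<in>G. M g)"
  shows "\<exists>g\<in>G. M g \<in> C"
proof (rule ccontr)
  assume nc: "\<not> (\<exists>g\<in>G. M g \<in> C)"
  have "M ` G \<subseteq> DD" using G D0_M unfolding rset_def by auto
  moreover have "M ` G \<inter> C = {}" using nc by auto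
  moreover have "finite (M ` G)" using G by simp
  ultimately have "\<not> E \<subseteq> \<Union>(M ` G)" using LS_filter(5)[OF C _ _ _ E] by blast
  thus False using sub by simp
qed

lemma rsetI: "a \<in> L \<Longrightarrow> r a = v \<Longrightarrow> a \<in> rset L r v" unfolding rset_def by simp
lemma rsetD: "a \<in> rset L r v \<Longrightarrow> a \<in> L \<and> r a = v" unfolding rset_def by simp

lemma C_has_M: assumes C: "C \<in> LS" and E: "E \<in> C"
  shows "\<exists>g\<in>rset L r v. M g \<in> C \<and> M g \<subseteq> E"
proof -
  have ED: "E \<in> DD" using LS_filter(2)[OF C] E by blast
  obtain G where G: "finite G" "G \<subseteq> rset L r v" "E = (\<Union>g\<in>G. M g)" using D0_fin[OF ED] by blast
  obtain g where g: "g \<in> G" "M g \<in> C" using cov[OF C E G(1,2)] G(3) by blast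
  thus ?thesis using G by blast
qed

lemma H_in_DH: assumes C: "C \<in> LS" shows "H_of L r s c v C \<in> DHs"
proof -
  let ?H = "H_of L r s c v C"
  have Hs: "?H \<subseteq> rset L r v" unfolding H_of_def by blast
  obtain E where "E \<in> C" using LS_filter(1)[OF C] by blast
  then obtain g where g: "g \<in> rset L r v" "M g \<in> C" using C_has_M[OF C] by blast
  hence ne: "?H \<noteq> {}" unfolding H_of_def by blast
  have "directed L r s c ?H" unfolding directed_def
  proof (intro conjI ballI ne)
    fix a b assume a: "a \<in> ?H" and b: "b \<in> ?H"
    hence aL: "a \<in> L" "r a = v" and bL: "b \<in> L" and Ma: "M a \<in> C" and Mb: "M b \<in> C"
      unfolding H_of_def rset_def by auto
    have ab: "M a \<inter> M b \<in> C" using LS_filter(3)[OF C Ma Mb] .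
    from fa aL bL obtain G0 where G0: "finite G0" "G0 \<subseteq> L" "M a \<inter> M b = (\<Union>e\<in>G0. M e)"
      unfolding finitely_aligned_def by meson
    have "G0 \<subseteq> rset L r v"
    proof
      fix e assume e: "e \<in> G0"
      hence "e \<in> M a" using G0 self_M by blast
      thus "e \<in> rset L r v" using M_L[OF aL(1)] aL(2) rsetI by auto
    qed
    then obtain e where e: "e \<in> G0" "M e \<in> C" using cov[OF C ab G0(1)] G0(3) by blast
    have "e \<in> ?H" using e \<open>G0 \<subseteq> rset L r v\<close> unfolding H_of_def by blast
    moreover have "e \<in> M a \<inter> M b" using e G0 self_M by blast
    ultimately show "?H \<inter> M a \<inter> M b \<noteq> {}" by blast
  qed
  moreover have "hereditary L r s c ?H" unfolding hereditary_def
  proof (intro conjI ballI impI ne)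
    fix a g assume a: "a \<in> ?H" and g: "g \<in> L" and ag: "a \<in> M g"
    hence Ma: "M a \<in> C" and aL: "a \<in> L" "r a = v" unfolding H_of_def rset_def by auto
    have gv: "r g = v" using M_L[OF g ag] aL by simp
    have "M a \<subseteq> M g" using M_sub[OF g ag] .
    moreover have "M g \<in> DD" using D0_M[OF g gv] .
    ultimately have "M g \<in> C" using LS_filter(4)[OF C Ma] by blast
    thus "g \<in> ?H" using g gv unfolding H_of_def rset_def by blast
  qed
  ultimately show ?thesis using Hs by blast
qed

lemma CH_C: assumes C: "C \<in> LS" shows "C_of L r s c v (H_of L r s c v C) = C"
proof (intro set_eqI iffI)
  fix E assume "E \<in> C_of L r s c v (H_of L r s c v C)"
  then obtain a where "E \<in> DD" "M a \<in> C" "M a \<subseteq> E" unfolding C_of_def H_of_def by blast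
  thus "E \<in> C" using LS_filter(4)[OF C] by blast
next
  fix E assume E: "E \<in> C"
  obtain g where "g \<in> rset L r v" "M g \<in> C" "M g \<subseteq> E" using C_has_M[OF C E] by blast
  moreover have "E \<in> DD" using LS_filter(2)[OF C] E by blast
  ultimately show "E \<in> C_of L r s c v (H_of L r s c v C)" unfolding C_of_def H_of_def by blast
qed

lemma DH_facts: assumes H: "H \<in> DHs"
  shows "H \<subseteq> L" "\<And>a. a \<in> H \<Longrightarrow> r a = v" "H \<noteq> {}"
    "\<And>a b. a \<in> H \<Longrightarrow> b \<in> H \<Longrightarrow> \<exists>e\<in>H. M e \<subseteq> M a \<and> M e \<subseteq> M b"
    "\<And>a g. a \<in> H \<Longrightarrow> g \<in> L \<Longrightarrow> a \<in> M g \<Longrightarrow> g \<in> H"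
proof -
  show HL: "H \<subseteq> L" using H unfolding rset_def by auto
  show "\<And>a. a \<in> H \<Longrightarrow> r a = v" using H unfolding rset_def by auto
  show "H \<noteq> {}" using H unfolding directed_def by auto
  show "\<And>a g. a \<in> H \<Longrightarrow> g \<in> L \<Longrightarrow> a \<in> M g \<Longrightarrow> g \<in> H" using H unfolding hereditary_def by auto
  fix a b assume a: "a \<in> H" and b: "b \<in> H"
  then obtain e where e: "e \<in> H" "e \<in> M a" "e \<in> M b" using H unfolding directed_def by blast
  have "M e \<subseteq> M a" "M e \<subseteq> M b" using M_sub e a b HL by auto
  thus "\<exists>e\<in>H. M e \<subseteq> M a \<and> M e \<subseteq> M b" using e by blast
qed

lemma C_in_LS: assumes H: "H \<in> DHs" shows "C_of L r s c v H \<in> LS"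
proof -
  let ?C = "C_of L r s c v H"
  note HF = DH_facts[OF H]
  have "filter_in DD ?C" unfolding filter_in_def
  proof (intro conjI ballI impI)
    obtain a where a: "a \<in> H" using HF(3) by blast
    hence "M a \<in> DD" using D0_M HF(1,2) by blast
    thus "?C \<noteq> {}" using a unfolding C_of_def by blast
    show "?C \<subseteq> DD" unfolding C_of_def by blast
  next
    fix E F assume "E \<in> ?C" "F \<in> ?C"
    then obtain a b where ab: "E \<in> DD" "F \<in> DD" "a \<in> H" "b \<in> H" "M a \<subseteq> E" "M b \<subseteq> F"
      unfolding C_of_def by blast
    obtain e where e: "e \<in> H" "M e \<subseteq> M a" "M e \<subseteq> M b" using HF(4)[OF ab(3,4)] by blast
    have "e \<in> M e" using self_M HF(1) e(1) by blast
    hence "e \<in> E \<inter> F" using e(2,3) ab(5,6) by blast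
    hence "E \<inter> F \<in> DD" using D0_int[OF ab(1,2)] by blast
    moreover have "M e \<subseteq> E \<inter> F" using e(2,3) ab(5,6) by blast
    ultimately show "E \<inter> F \<in> ?C" using e(1) unfolding C_of_def by blast
  next
    fix E F assume "E \<in> ?C" "F \<in> DD" "E \<subseteq> F"
    thus "F \<in> ?C" unfolding C_of_def by blast
  qed
  moreover have "\<not> (\<exists>E\<in>?C. E \<subseteq> \<Union>F)" if F: "F \<subseteq> DD" "F \<inter> ?C = {}" for F
  proof
    assume "\<exists>E\<in>?C. E \<subseteq> \<Union>F"
    then obtain E a where Ea: "E \<in> DD" "a \<in> H" "M a \<subseteq> E" "E \<subseteq> \<Union>F" unfolding C_of_def by blast
    have "a \<in> M a" using self_M HF(1) Ea by blast
    then obtain X where X: "X \<in> F" "a \<in> X" using Ea by blast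
    have "M a \<subseteq> X" using D0_right X F by blast
    hence "X \<in> ?C" using X F Ea unfolding C_of_def by blast
    thus False using X F by blast
  qed
  ultimately show ?thesis unfolding Lstar_def by blast
qed

lemma HC_H: assumes H: "H \<in> DHs" shows "H_of L r s c v (C_of L r s c v H) = H"
proof (intro set_eqI iffI)
  note HF = DH_facts[OF H]
  fix a assume "a \<in> H_of L r s c v (C_of L r s c v H)"
  then obtain b where a: "a \<in> rset L r v" "b \<in> H" "M b \<subseteq> M a" unfolding H_of_def C_of_def by blast
  have "b \<in> M a" using self_M HF(1) a by blast
  thus "a \<in> H" using HF(5) a rsetD by blast
next
  note HF = DH_facts[OF H]
  fix a assume a: "a \<in> H"
  have "M a \<in> DD" using D0_M HF(1,2) a by blast
  thus "a \<in> H_of L r s c v (C_of L r s c v H)" using a H unfolding H_of_def C_of_def by blast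
qed

end



context lcv begin

lemma dich: assumes H: "H \<in> DHs" and A: "A \<in> ring_gen DD"
  shows "(\<exists>a\<in>H. H \<inter> M a \<subseteq> A) \<or> (\<exists>a\<in>H. H \<inter> M a \<inter> A = {})"
  using A
proof (induction A rule: ring_gen.induct)
  note HF = DH_facts[OF H]
  case (basic E)
  show ?case
  proof (cases "H \<inter> E = {}")
    case True
    obtain a where "a \<in> H" using HF(3) by blast
    thus ?thesis using True by blast
  next
    case False
    then obtain x where x: "x \<in> H" "x \<in> E" by blast
    have "M x \<subseteq> E" using D0_right[OF basic x(2)] .
    thus ?thesis using x(1) by blast
  qed
next
  note HF = DH_facts[OF H]
  case empty
  obtain a where "a \<in> H" using HF(3) by blast
  thus ?case by blast
next
  note HF = DH_facts[OF H]
  case (union A B)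
  show ?case
  proof (cases "(\<exists>a\<in>H. H \<inter> M a \<subseteq> A) \<or> (\<exists>a\<in>H. H \<inter> M a \<subseteq> B)")
    case True thus ?thesis by blast
  next
    case False
    then obtain a b where ab: "a \<in> H" "b \<in> H" "H \<inter> M a \<inter> A = {}" "H \<inter> M b \<inter> B = {}"
      using union.IH by blast
    obtain e where e: "e \<in> H" "M e \<subseteq> M a" "M e \<subseteq> M b" using HF(4)[OF ab(1,2)] by blast
    have "H \<inter> M e \<inter> (A \<union> B) = {}" using e ab by blast
    thus ?thesis using e(1) by blast
  qed
next
  note HF = DH_facts[OF H]
  case (diff A B)
  show ?case
  proof (cases "\<exists>a\<in>H. H \<inter> M a \<inter> A = {}")
    case True thus ?thesis by blast
  next
    case False
    then obtain a where a: "a \<in> H" "H \<inter> M a \<subseteq> A" using diff.IH by blast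
    show ?thesis
    proof (cases "\<exists>b\<in>H. H \<inter> M b \<subseteq> B")
      case True
      then obtain b where b: "b \<in> H" "H \<inter> M b \<subseteq> B" by blast
      obtain e where e: "e \<in> H" "M e \<subseteq> M a" "M e \<subseteq> M b" using HF(4)[OF a(1) b(1)] by blast
      have "H \<inter> M e \<inter> (A - B) = {}" using e b by blast
      thus ?thesis using e(1) by blast
    next
      case False
      then obtain b where b: "b \<in> H" "H \<inter> M b \<inter> B = {}" using diff.IH by blast
      obtain e where e: "e \<in> H" "M e \<subseteq> M a" "M e \<subseteq> M b" using HF(4)[OF a(1) b(1)] by blast
      have "H \<inter> M e \<subseteq> A - B" using e a b by blast
      thus ?thesis using e(1) by blast
    qed
  qed
qed

lemma Up_uf: assumes H: "H \<in> DHs"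
  shows "ultrafilter_in (ring_gen DD) {A \<in> ring_gen DD. \<exists>a\<in>H. H \<inter> M a \<subseteq> A}"
proof -
  note HF = DH_facts[OF H]
  let ?U = "{A \<in> ring_gen DD. \<exists>a\<in>H. H \<inter> M a \<subseteq> A}"
  have fi: "filter_in (ring_gen DD) ?U" unfolding filter_in_def
  proof (intro conjI ballI impI)
    obtain a where a: "a \<in> H" using HF(3) by blast
    hence "M a \<in> DD" using D0_M HF(1,2) by blast
    hence "M a \<in> ring_gen DD" by (rule ring_gen.basic)
    thus "?U \<noteq> {}" using a by blast
    show "?U \<subseteq> ring_gen DD" by blast
  next
    fix E F assume E: "E \<in> ?U" and F: "F \<in> ?U"
    then obtain a b where ab: "a \<in> H" "b \<in> H" "H \<inter> M a \<subseteq> E" "H \<inter> M b \<subseteq> F" by blast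
    obtain e where e: "e \<in> H" "M e \<subseteq> M a" "M e \<subseteq> M b" using HF(4)[OF ab(1,2)] by blast
    have "E \<in> ring_gen DD" "F \<in> ring_gen DD" using E F by simp_all
    hence "E \<inter> F \<in> ring_gen DD" by (rule rg_int)
    moreover have "H \<inter> M e \<subseteq> E \<inter> F" using e ab by blast
    ultimately show "E \<inter> F \<in> ?U" using e(1) by blast
  next
    fix E F assume "E \<in> ?U" "F \<in> ring_gen DD" "E \<subseteq> F"
    thus "F \<in> ?U" by blast
  qed
  have ne: "{} \<notin> ?U"
  proof
    assume "{} \<in> ?U"
    then obtain a where "a \<in> H" "H \<inter> M a \<subseteq> {}" by blast
    moreover have "a \<in> M a" using self_M HF(1) calculation by blast
    ultimately show False by blast
  qed
  have mx: "U' = ?U" if U': "filter_in (ring_gen DD) U'" "{} \<notin> U'" "?U \<subseteq> U'" for U'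
  proof
    show "U' \<subseteq> ?U"
    proof
      fix X assume X: "X \<in> U'"
      have XR: "X \<in> ring_gen DD" using U'(1) X unfolding filter_in_def by auto
      show "X \<in> ?U"
      proof (cases "\<exists>a\<in>H. H \<inter> M a \<subseteq> X")
        case True thus ?thesis using XR by blast
      next
        case False
        then obtain a where a: "a \<in> H" "H \<inter> M a \<inter> X = {}" using dich[OF H XR] by blast
        have "M a \<in> DD" using D0_M HF(1,2) a by blast
        hence "M a \<in> ring_gen DD" by (rule ring_gen.basic)
        hence "M a - X \<in> ring_gen DD" using XR by (rule ring_gen.diff)
        moreover have "H \<inter> M a \<subseteq> M a - X" using a by blast
        ultimately have "M a - X \<in> ?U" using a(1) by blast
        hence "M a - X \<in> U'" using U'(3) by blast
        moreover have "\<And>E F. E \<in> U' \<Longrightarrow> F \<in> U' \<Longrightarrow> E \<inter> F \<in> U'"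
          using U'(1) unfolding filter_in_def by simp
        ultimately have "X \<inter> (M a - X) \<in> U'" using X by blast
        moreover have "X \<inter> (M a - X) = {}" by blast
        ultimately show ?thesis using U'(2) by simp
      qed
    qed
    show "?U \<subseteq> U'" using U'(3) .
  qed
  show ?thesis unfolding ultrafilter_in_def using fi ne mx by blast
qed

lemma Up_trace: assumes H: "H \<in> DHs"
  shows "{A \<in> ring_gen DD. \<exists>a\<in>H. H \<inter> M a \<subseteq> A} \<inter> DD = C_of L r s c v H"
proof (intro set_eqI iffI)
  note HF = DH_facts[OF H]
  fix E assume "E \<in> {A \<in> ring_gen DD. \<exists>a\<in>H. H \<inter> M a \<subseteq> A} \<inter> DD"
  then obtain a where E: "E \<in> DD" "a \<in> H" "H \<inter> M a \<subseteq> E" by blast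
  have "a \<in> M a" using self_M HF(1) E by blast
  hence "a \<in> E" using E by blast
  hence "M a \<subseteq> E" using D0_right E by blast
  thus "E \<in> C_of L r s c v H" using E unfolding C_of_def by blast
next
  fix E assume "E \<in> C_of L r s c v H"
  then obtain a where E: "E \<in> DD" "a \<in> H" "M a \<subseteq> E" unfolding C_of_def by blast
  have "E \<in> ring_gen DD" using E(1) by (rule ring_gen.basic)
  thus "E \<in> {A \<in> ring_gen DD. \<exists>a\<in>H. H \<inter> M a \<subseteq> A} \<inter> DD" using E by blast
qed

lemma U_eq: assumes C: "C \<in> LS"
  shows "U_of L r s c v C = {A \<in> A_ring L r s c v. \<exists>a\<in>H_of L r s c v C. H_of L r s c v C \<inter> M a \<subseteq> A}"
proof -
  let ?H = "H_of L r s c v C"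
  have H: "?H \<in> DHs" using H_in_DH[OF C] .
  let ?U = "{A \<in> ring_gen DD. \<exists>a\<in>?H. ?H \<inter> M a \<subseteq> A}"
  have uf: "ultrafilter_in (ring_gen DD) ?U" using Up_uf[OF H] .
  have tr: "?U \<inter> DD = C" using Up_trace[OF H] CH_C[OF C] by simp
  have "(THE U. ultrafilter_in (A_ring L r s c v) U \<and> U \<inter> DD = C) = ?U"
  proof (rule the_equality)
    show "ultrafilter_in (A_ring L r s c v) ?U \<and> ?U \<inter> DD = C" using uf tr unfolding A_ring_def by simp
  next
    fix U assume "ultrafilter_in (A_ring L r s c v) U \<and> U \<inter> DD = C"
    thus "U = ?U" using uf_eq[OF _ uf] tr unfolding A_ring_def by simp
  qed
  thus ?thesis unfolding U_of_def A_ring_def by simp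
qed

end

theorem mainTheorem5:
  fixes L :: "'a set" and r s :: "'a \<Rightarrow> 'a" and c :: "'a \<Rightarrow> 'a \<Rightarrow> 'a" and v :: 'a
  assumes "LCSC L r s c" and "finitely_aligned L r s c" and "v \<in> objects L r"
  defines "DH \<equiv> {H. H \<subseteq> rset L r v \<and> directed L r s c H \<and> hereditary L r s c H}"
  shows "bij_betw (H_of L r s c v) (Lstar L r s c v) DH
    \<and> (\<forall>C\<in>Lstar L r s c v. C_of L r s c v (H_of L r s c v C) = C)
    \<and> (\<forall>H\<in>DH. C_of L r s c v H \<in> Lstar L r s c v \<and> H_of L r s c v (C_of L r s c v H) = H)
    \<and> (\<forall>C1\<in>Lstar L r s c v. \<forall>C2\<in>Lstar L r s c v.
          C1 \<subseteq> C2 \<longleftrightarrow> H_of L r s c v C1 \<subseteq> H_of L r s c v C2)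
    \<and> (\<forall>C\<in>Lstar L r s c v. U_of L r s c v C =
          {A \<in> A_ring L r s c v. \<exists>a\<in>H_of L r s c v C. H_of L r s c v C \<inter> mset L r s c a \<subseteq> A})"
proof -
  interpret lcv L r s c v
    by unfold_locales (rule assms)+
  have p1: "\<forall>C\<in>Lstar L r s c v. C_of L r s c v (H_of L r s c v C) = C" using CH_C by blast
  have p2: "\<forall>H\<in>DH. C_of L r s c v H \<in> Lstar L r s c v \<and> H_of L r s c v (C_of L r s c v H) = H"
    unfolding DH_def using C_in_LS HC_H by blast
  have p0: "bij_betw (H_of L r s c v) (Lstar L r s c v) DH"
  proof (rule bij_betw_byWitness[where f' = "C_of L r s c v"])
    show "\<forall>a\<in>Lstar L r s c v. C_of L r s c v (H_of L r s c v a) = a" using p1 .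
    show "\<forall>a'\<in>DH. H_of L r s c v (C_of L r s c v a') = a'" using p2 by blast
    show "H_of L r s c v ` Lstar L r s c v \<subseteq> DH" unfolding DH_def using H_in_DH by blast
    show "C_of L r s c v ` DH \<subseteq> Lstar L r s c v" using p2 by blast
  qed
  have p3: "\<forall>C1\<in>Lstar L r s c v. \<forall>C2\<in>Lstar L r s c v.
          C1 \<subseteq> C2 \<longleftrightarrow> H_of L r s c v C1 \<subseteq> H_of L r s c v C2"
  proof (intro ballI iffI)
    fix C1 C2 :: "'a set set" assume "C1 \<in> Lstar L r s c v" "C2 \<in> Lstar L r s c v" "C1 \<subseteq> C2"
    thus "H_of L r s c v C1 \<subseteq> H_of L r s c v C2" unfolding H_of_def by blast
  next
    fix C1 C2 assume C: "C1 \<in> Lstar L r s c v" "C2 \<in> Lstar L r s c v"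
      and h: "H_of L r s c v C1 \<subseteq> H_of L r s c v C2"
    have "C_of L r s c v (H_of L r s c v C1) \<subseteq> C_of L r s c v (H_of L r s c v C2)"
      using h unfolding C_of_def by blast
    thus "C1 \<subseteq> C2" using CH_C C by simp
  qed
  have p4: "\<forall>C\<in>Lstar L r s c v. U_of L r s c v C =
          {A \<in> A_ring L r s c v. \<exists>a\<in>H_of L r s c v C. H_of L r s c v C \<inter> mset L r s c a \<subseteq> A}"
    using U_eq by blast
  show ?thesis using p0 p1 p2 p3 p4 by blast
qed



end
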